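(* Let $(a_n)_{n\ge0}$ be the sequence $a_0=1$, $a_1=1$, $a_n=2a_{n-1}+a_{n-2}$ for $n\ge2$ (so $a=(1,1,3,7,17,41,\ldots)$, the numerators of the continued fraction convergents to $\sqrt2$). Then for all $n\ge0$, $a_n=\sum_{i=0}^n\binom{n}{i}(-1)^i2^{n-i}a_i$, and for all $n\ge1$, $$\sum_{i=0}^{n-1}\binom{n}{i}(-1)^i2^{n-i}a_i=\begin{cases}0,& n\text{ even},\\ 2a_n,& n\text{ odd}.\end{cases}$$ *)

theory Defs
  imports Main
begin

fun pell_a :: "nat \<Rightarrow> int" where
  "pell_a 0 = 1"
| "pell_a (Suc 0) = 1"
| "pell_a (Suc (Suc n)) = 2 * pell_a (Suc n) + pell_a n"

end

theory Submission
  imports Defs Complex_Main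
begin

lemma closed: "real_of_int (pell_a n) = ((1+sqrt 2)^n + (1-sqrt 2)^n)/2"
proof (induction n rule: pell_a.induct)
  case (3 n)
  have a: "(1+sqrt 2)^Suc (Suc n) = 2*(1+sqrt 2)^Suc n + (1+sqrt 2)^n"
    by (simp add: algebra_simps power2_eq_square)
  have b: "(1-sqrt 2)^Suc (Suc n) = 2*(1-sqrt 2)^Suc n + (1-sqrt 2)^n"
    by (simp add: algebra_simps power2_eq_square)
  have "real_of_int (pell_a (Suc (Suc n))) = 2*real_of_int (pell_a (Suc n)) + real_of_int (pell_a n)"
    by simp
  also have "\<dots> = 2*(((1+sqrt 2)^Suc n + (1-sqrt 2)^Suc n)/2) + ((1+sqrt 2)^n + (1-sqrt 2)^n)/2"
    by (simp only: 3)
  also have "\<dots> = ((1+sqrt 2)^Suc (Suc n) + (1-sqrt 2)^Suc (Suc n))/2"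
    unfolding a b by (simp add: field_simps)
  finally show ?case .
qed auto

lemma binom: "(\<Sum>i=0..n. real (n choose i) * (-1)^i * 2^(n-i) * x^i) = (2 - x)^n"
proof -
  have "(2 - x)^n = ((-x) + 2)^n" by simp
  also have "\<dots> = (\<Sum>i=0..n. real (n choose i) * (-x)^i * 2^(n-i))"
    using binomial_ring[of "-x" 2 n] by (simp add: atLeast0AtMost)
  also have "\<dots> = (\<Sum>i=0..n. real (n choose i) * (-1)^i * 2^(n-i) * x^i)"
    by (rule sum.cong) (simp_all add: power_minus[of x] mult_ac)
  finally show ?thesis by simp
qed

lemma part1: "pell_a n = (\<Sum>i=0..n. of_nat (n choose i) * (-1)^i * 2^(n-i) * pell_a i)"
proof -
  let ?a = "1 + sqrt 2" and ?b = "1 - sqrt 2"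
  have "real_of_int (\<Sum>i=0..n. of_nat (n choose i) * (-1)^i * 2^(n-i) * pell_a i)
      = (\<Sum>i=0..n. (real (n choose i) * (-1)^i * 2^(n-i) * ?a^i
                    + real (n choose i) * (-1)^i * 2^(n-i) * ?b^i)/2)"
    by (simp add: closed algebra_simps add_divide_distrib)
  also have "\<dots> = ((2 - ?a)^n + (2 - ?b)^n)/2"
    by (simp add: sum_divide_distrib[symmetric] sum.distrib binom)
  also have "\<dots> = real_of_int (pell_a n)"
    by (simp add: closed)
  finally show ?thesis by linarith
qed

theorem mainTheorem10:
  shows "(\<forall>n::nat. pell_a n = (\<Sum>i=0..n. of_nat (n choose i) * (-1)^i * 2^(n-i) * pell_a i))
    \<and> (\<forall>n::nat. n \<ge> 1 \<longrightarrow>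
        (\<Sum>i=0..n-1. of_nat (n choose i) * (-1)^i * 2^(n-i) * pell_a i) =
          (if even n then 0 else 2 * pell_a n))"
proof (intro conjI allI impI)
  fix n :: nat show "pell_a n = (\<Sum>i=0..n. of_nat (n choose i) * (-1)^i * 2^(n-i) * pell_a i)"
    by (rule part1)
next
  fix n :: nat assume "n \<ge> 1"
  then obtain m where m: "n = Suc m" by (cases n) auto
  have "pell_a n = (\<Sum>i=0..n-1. of_nat (n choose i) * (-1)^i * 2^(n-i) * pell_a i) + (-1)^n * pell_a n"
    using part1[of n] by (simp add: m)
  then show "(\<Sum>i=0..n-1. of_nat (n choose i) * (-1)^i * 2^(n-i) * pell_a i) =
          (if even n then 0 else 2 * pell_a n)"
    by auto
qed

end
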